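(* Let $A>0$ and let $k_{\min},k_{\max},\mu_{\min},\mu_{\max}\in C^0([0,A];\mathbb{R}_{\ge 0})$ be Lipschitz functions such that $$k_{\min}(a)\le k_{\max}(a),\qquad \mu_{\min}(a)\le \mu_{\max}(a)\qquad \forall a\in[0,A],$$ and $$\int_0^A k_{\min}(a)\,e^{-\int_0^a \mu_{\max}(s)\,ds}\,da>1 .$$ Let $\zeta_{\min}$ and $\zeta_{\max}$ be the unique solutions of $$\int_0^A k_{\min}(a)e^{-\zeta_{\min} a-\int_0^a \mu_{\max}(s)\,ds}\,da=1,\qquad \int_0^A k_{\max}(a)e^{-\zeta_{\max} a-\int_0^a \mu_{\min}(s)\,ds}\,da=1,$$ so that $\zeta_{\min}\le\zeta_{\max}$. Let $G>0$ be large enough that $\|f\|_\infty+\sup_{a\neq s}\frac{|f(a)-f(s)|}{|a-s|}\le G$ for each $f\in\{k_{\min},k_{\max},\mu_{\min},\mu_{\max}\}$. Define $$H_G:=\Big\{f\in C^0([0,A];\mathbb{R}_{\ge0}):\ \|f\|_\infty+\sup_{a,s\in[0,A],\,a\ne s}\tfrac{|f(a)-f(s)|}{|a-s|}\le G\Big\},$$ $$S:=\{(k,\mu)\in H_G^2:\ k_{\min}(a)\le k(a)\le k_{\max}(a),\ \mu_{\min}(a)\le\mu(a)\le\mu_{\max}(a)\ \forall a\in[0,A]\}.$$ For $(k,\mu)\in S$ let $P(k,\mu)=\zeta$, where $\zeta>0$ is the unique solution of $\int_0^A k(a)e^{-\zeta a-\int_0^a\mu(s)\,ds}\,da=1$.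 Then $P$ maps $S$ into $[\zeta_{\min},\zeta_{\max}]$ and is Lipschitz continuous with respect to the sup norm: for all $(k,\mu),(\tilde k,\tilde\mu)\in S$, $$|P(\tilde k,\tilde\mu)-P(k,\mu)|\le L\,\|\tilde k-k\|_\infty+L\,\|k_{\max}\|_\infty\,A\,\|\tilde\mu-\mu\|_\infty,$$ where, with $I(a):=e^{-\int_0^a\mu_{\max}(s)\,ds}$, $$L=\frac{A\,\bigl(2A\|k_{\max}\|_\infty\bigr)^{2A\|k_{\max}\|_\infty-1}}{\left(\int_0^A a\,k_{\min}(a)I(a)\,da\right)\ln\!\left(\int_0^A k_{\min}(a)I(a)\,da\right)}.$$
   Context: $\|f\|_\infty=\sup_{a\in[0,A]}|f(a)|$. $C^0([0,A];\mathbb{R}_{\ge0})$ denotes continuous nonnegative functions on $[0,A]$. $P$ is the Lotka–Sharpe map assigning to a fertility profile $k$ and mortality profile $\mu$ the intrinsic growth rate $\zeta$. *)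

theory Defs
  imports "HOL-Analysis.Analysis"
begin

definition sup_norm :: "real \<Rightarrow> (real \<Rightarrow> real) \<Rightarrow> real" where
  "sup_norm A f = Sup ((\<lambda>a. \<bar>f a\<bar>) ` {0..A})"

definition diff_quots :: "real \<Rightarrow> (real \<Rightarrow> real) \<Rightarrow> real set" where
  "diff_quots A f = {\<bar>f a - f s\<bar> / \<bar>a - s\<bar> | a s. a \<in> {0..A} \<and> s \<in> {0..A} \<and> a \<noteq> s}"

definition lip_seminorm :: "real \<Rightarrow> (real \<Rightarrow> real) \<Rightarrow> real" where
  "lip_seminorm A f = Sup (diff_quots A f)"

text \<open>The set H_G (the supremum of difference quotients is required to be finite).\<close>
definition H_G :: "real \<Rightarrow> real \<Rightarrow> (real \<Rightarrow> real) set" where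
  "H_G A G = {f. continuous_on {0..A} f \<and> (\<forall>a\<in>{0..A}. 0 \<le> f a) \<and>
                 bdd_above (diff_quots A f) \<and> sup_norm A f + lip_seminorm A f \<le> G}"

definition lotka_eq :: "real \<Rightarrow> (real \<Rightarrow> real) \<Rightarrow> (real \<Rightarrow> real) \<Rightarrow> real \<Rightarrow> bool" where
  "lotka_eq A k \<mu> \<zeta> \<longleftrightarrow>
     integral {0..A} (\<lambda>a. k a * exp (- \<zeta> * a - integral {0..a} \<mu>)) = 1"

definition lotka_sol :: "real \<Rightarrow> (real \<Rightarrow> real) \<Rightarrow> (real \<Rightarrow> real) \<Rightarrow> real" where
  "lotka_sol A k \<mu> = (THE \<zeta>. lotka_eq A k \<mu> \<zeta>)"

definition lotka_P :: "real \<Rightarrow> (real \<Rightarrow> real) \<Rightarrow> (real \<Rightarrow> real) \<Rightarrow> real" where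
  "lotka_P A k \<mu> = (THE \<zeta>. 0 < \<zeta> \<and> lotka_eq A k \<mu> \<zeta>)"

end

theory Submission
  imports Defs "HOL-Analysis.Analysis"
begin

definition FF :: "real \<Rightarrow> (real \<Rightarrow> real) \<Rightarrow> real \<Rightarrow> real" where
  "FF A g z = integral {0..A} (\<lambda>a. g a * exp (-(z*a)))"

lemma FF_int:
  fixes g :: "real \<Rightarrow> real" and A z :: real
  assumes "continuous_on {0..A} g"
  shows "(\<lambda>a. g a * exp (-(z*a))) integrable_on {0..A}"
  by (intro integrable_continuous_interval continuous_intros assms)

lemma FF_diff_lower:
  assumes g: "continuous_on {0..A} g" "\<forall>a\<in>{0..A}. 0 \<le> g a" and zz: "z \<le> z'"
  shows "(z'-z) * integral {0..A} (\<lambda>a. a * g a * exp (-(z'*a))) \<le> FF A g z - FF A g z'"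
proof -
  have i: "(\<lambda>a. a * g a * exp (-(z'*a))) integrable_on {0..A}"
    by (intro integrable_continuous_interval continuous_intros g)
  have "(z'-z) * integral {0..A} (\<lambda>a. a * g a * exp (-(z'*a)))
      = integral {0..A} (\<lambda>a. (z'-z) * (a * g a * exp (-(z'*a))))"
    by (simp add: integral_mult_right)
  also have "\<dots> \<le> integral {0..A} (\<lambda>a. g a * exp (-(z*a)) - g a * exp (-(z'*a)))"
  proof (rule integral_le)
    show "(\<lambda>a. (z'-z) * (a * g a * exp (-(z'*a)))) integrable_on {0..A}"
      by (intro integrable_continuous_interval continuous_intros g)
    show "(\<lambda>a. g a * exp (-(z*a)) - g a * exp (-(z'*a))) integrable_on {0..A}"
      by (intro integrable_continuous_interval continuous_intros g)
    fix a assume a: "a \<in> {0..A}"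
    have e0: "-(z*a) = -(z'*a) + ((z'-z)*a)" by (simp add: algebra_simps)
    have "exp (-(z*a)) = exp (-(z'*a)) * exp ((z'-z)*a)"
      by (metis e0 exp_add)
    also have "\<dots> \<ge> exp (-(z'*a)) * (1 + (z'-z)*a)"
      by (intro mult_left_mono) auto
    finally have "exp (-(z*a)) - exp (-(z'*a)) \<ge> (z'-z)*a*exp (-(z'*a))"
      by (simp add: algebra_simps)
    from mult_left_mono[OF this, of "g a"] a g(2)
    show "(z'-z) * (a * g a * exp (-(z'*a))) \<le> g a * exp (-(z*a)) - g a * exp (-(z'*a))"
      by (simp add: algebra_simps)
  qed
  also have "\<dots> = FF A g z - FF A g z'"
    unfolding FF_def by (intro integral_diff FF_int g)
  finally show ?thesis .
qed

lemma FF_diff_upper: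
  assumes g: "continuous_on {0..A} g" "\<forall>a\<in>{0..A}. 0 \<le> g a" and zz: "0 \<le> z" "z \<le> z'"
  shows "FF A g z - FF A g z' \<le> (z'-z) * A * integral {0..A} g"
proof -
  have "FF A g z - FF A g z' = integral {0..A} (\<lambda>a. g a * exp (-(z*a)) - g a * exp (-(z'*a)))"
    unfolding FF_def by (intro integral_diff[symmetric] FF_int g)
  also have "\<dots> \<le> integral {0..A} (\<lambda>a. (z'-z) * A * g a)"
  proof (rule integral_le)
    show "(\<lambda>a. (z'-z) * A * g a) integrable_on {0..A}"
      by (intro integrable_continuous_interval continuous_intros g)
    show "(\<lambda>a. g a * exp (-(z*a)) - g a * exp (-(z'*a))) integrable_on {0..A}"
      by (intro integrable_continuous_interval continuous_intros g)
    fix a assume a: "a \<in> {0..A}"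
    have e0: "-(z'*a) = -(z*a) + (-((z'-z)*a))" by (simp add: algebra_simps)
    have e: "exp (-(z'*a)) = exp (-(z*a)) * exp (-((z'-z)*a))"
      by (metis e0 exp_add)
    have "1 - exp (-((z'-z)*a)) \<le> (z'-z)*a"
      using exp_ge_add_one_self[of "-((z'-z)*a)"] by linarith
    also have "\<dots> \<le> (z'-z)*A" using a zz by (intro mult_left_mono) auto
    finally have h1: "1 - exp (-((z'-z)*a)) \<le> (z'-z)*A" .
    have h0: "0 \<le> 1 - exp (-((z'-z)*a))" using a zz by (simp add: mult_nonneg_nonneg)
    have h2: "exp (-(z*a)) \<le> 1" using a zz by (simp add: mult_nonneg_nonneg)
    have "exp (-(z*a)) - exp (-(z'*a)) = exp (-(z*a)) * (1 - exp (-((z'-z)*a)))"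
      unfolding e by (simp add: right_diff_distrib)
    also have "\<dots> \<le> 1 * ((z'-z)*A)"
      using h0 h1 h2 by (intro mult_mono) auto
    finally have "exp (-(z*a)) - exp (-(z'*a)) \<le> (z'-z)*A" by simp
    from mult_left_mono[OF this, of "g a"] a g(2)
    show "g a * exp (-(z*a)) - g a * exp (-(z'*a)) \<le> (z'-z) * A * g a"
      by (simp add: algebra_simps)
  qed
  also have "\<dots> = (z'-z) * A * integral {0..A} g"
    by (simp add: integral_mult_right)
  finally show ?thesis .
qed

lemma int_exp:
  fixes z A :: real
  assumes "0 < z" "0 \<le> A"
  shows "integral {0..A} (\<lambda>a. exp (-(z*a))) = (1 - exp (-(z*A))) / z"
proof -
  have "((\<lambda>a. exp (-(z*a))) has_integral ((\<lambda>a. - exp (-(z*a)) / z) A - (\<lambda>a. - exp (-(z*a)) / z) 0)) {0..A}"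
  proof (rule fundamental_theorem_of_calculus[where f="\<lambda>a. - exp (-(z*a)) / z"])
    fix x assume "x \<in> {0..A}"
    show "((\<lambda>a. - exp (-(z*a)) / z) has_vector_derivative exp (-(z*x))) (at x within {0..A})"
      unfolding has_real_derivative_iff_has_vector_derivative[symmetric]
      using assms by (auto intro!: derivative_eq_intros)
  qed (use assms in auto)
  then show ?thesis using assms by (simp add: integral_unique field_simps)
qed

lemma int_pos:
  fixes g w :: "real \<Rightarrow> real" and A :: real
  assumes A: "0 < A" and gc: "continuous_on {0..A} g" and wc: "continuous_on {0..A} w"
    and g0: "\<forall>a\<in>{0..A}. 0 \<le> g a" and w0: "\<forall>a\<in>{0..A}. 0 \<le> w a"
    and wp: "\<forall>a\<in>{0<..A}. 0 < w a" and gi: "integral {0..A} g \<noteq> 0"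
  shows "0 < integral {0..A} (\<lambda>a. w a * g a)"
proof (rule ccontr)
  assume "\<not> ?thesis"
  moreover have "0 \<le> integral {0..A} (\<lambda>a. w a * g a)"
    using g0 w0 by (intro integral_nonneg integrable_continuous_interval continuous_intros gc wc) auto
  ultimately have z: "integral (cbox 0 A) (\<lambda>a. w a * g a) = 0" by simp
  have "\<forall>x\<in>cbox 0 A. w x * g x = 0"
    using integral_cbox_eq_0_iff[of 0 A "\<lambda>a. w a * g a"] z A g0 w0 gc wc
    by (auto intro!: continuous_intros)
  then have g00: "g x = 0" if "x \<in> {0<..A}" for x using that wp by force
  have "g x = 0" if "x \<in> {0..A}" for x
    using continuous_constant_on_closure[of "{0<..A}" g 0 x] g00 that gc A by auto
  then have "integral {0..A} g = integral {0..A} (\<lambda>_. 0::real)"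
    by (intro integral_cong) auto
  then show False using gi by simp
qed

lemma sup_norm_ge:
  fixes f :: "real \<Rightarrow> real"
  assumes "continuous_on {0..A} f" "a \<in> {0..A}"
  shows "\<bar>f a\<bar> \<le> sup_norm A f"
proof -
  have "compact ((\<lambda>a. \<bar>f a\<bar>) ` {0..A})"
    by (intro compact_continuous_image continuous_intros assms) auto
  then have "bdd_above ((\<lambda>a. \<bar>f a\<bar>) ` {0..A})"
    by (intro bounded_imp_bdd_above compact_imp_bounded)
  then show ?thesis unfolding sup_norm_def using assms(2) by (rule cSUP_upper2) auto
qed

lemma FF_le:
  fixes g :: "real \<Rightarrow> real" and A M z :: real
  assumes A: "0 \<le> A" and gc: "continuous_on {0..A} g" and g0: "\<forall>a\<in>{0..A}. 0 \<le> g a"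
    and gM: "\<forall>a\<in>{0..A}. g a \<le> M" and z: "0 < z"
  shows "FF A g z \<le> M * ((1 - exp (-(z*A))) / z)"
proof -
  have "FF A g z \<le> integral {0..A} (\<lambda>a. M * exp (-(z*a)))"
    unfolding FF_def
    by (rule integral_le) (use gM in \<open>auto intro!: integrable_continuous_interval continuous_intros gc\<close>)
  also have "\<dots> = M * ((1 - exp (-(z*A))) / z)"
    using int_exp[OF z A] by (simp add: integral_mult_right)
  finally show ?thesis .
qed

lemma FF_strict:
  fixes g :: "real \<Rightarrow> real" and A :: real
  assumes A: "0 < A" and gc: "continuous_on {0..A} g" and g0: "\<forall>a\<in>{0..A}. 0 \<le> g a"
    and gi: "integral {0..A} g \<noteq> 0" and zz: "z < z'"
  shows "FF A g z' < FF A g z"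
proof -
  have "0 < integral {0..A} (\<lambda>a. (a * exp (-(z'*a))) * g a)"
    by (rule int_pos[OF A gc _ g0 _ _ gi]) (auto intro!: continuous_intros)
  then have "0 < (z'-z) * integral {0..A} (\<lambda>a. a * g a * exp (-(z'*a)))"
    using zz by (simp add: mult_ac)
  with FF_diff_lower[OF gc g0, of z z'] zz show ?thesis by simp
qed

lemma FF_cont:
  fixes g :: "real \<Rightarrow> real" and A Z :: real
  assumes gc: "continuous_on {0..A} g" and g0: "\<forall>a\<in>{0..A}. 0 \<le> g a" and A: "0 \<le> A"
  shows "continuous_on {0..Z} (FF A g)"
proof (rule lipschitz_on_continuous_on)
  have ig: "0 \<le> integral {0..A} g"
    using g0 by (intro integral_nonneg integrable_continuous_interval gc) auto
  have *: "\<bar>FF A g x - FF A g y\<bar> \<le> A * integral {0..A} g * \<bar>x - y\<bar>"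
    if "0 \<le> x" "x \<le> y" for x y
  proof -
    have "0 \<le> (y-x) * integral {0..A} (\<lambda>a. a * g a * exp (-(y*a)))"
      using that g0 by (intro mult_nonneg_nonneg integral_nonneg integrable_continuous_interval
          continuous_intros gc) auto
    then have "0 \<le> FF A g x - FF A g y" using FF_diff_lower[OF gc g0 that(2)] by linarith
    then show ?thesis using FF_diff_upper[OF gc g0 that] that by (simp add: algebra_simps)
  qed
  show "(A * integral {0..A} g)-lipschitz_on {0..Z} (FF A g)"
  proof (rule lipschitz_onI)
    fix x y assume "x \<in> {0..Z}" "y \<in> {0..Z}"
    then show "dist (FF A g x) (FF A g y) \<le> A * integral {0..A} g * dist x y"
      using *[of x y] *[of y x] unfolding dist_real_def
      by (cases "x \<le> y") (auto simp: abs_minus_commute)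
  qed (use A ig in auto)
qed

lemma FF_root:
  fixes g :: "real \<Rightarrow> real" and A :: real
  assumes A: "0 < A" and gc: "continuous_on {0..A} g" and g0: "\<forall>a\<in>{0..A}. 0 \<le> g a"
    and gi: "1 < integral {0..A} g"
  shows "\<exists>z>0. FF A g z = 1"
proof -
  define M where "M = sup_norm A g"
  have gM: "\<forall>a\<in>{0..A}. g a \<le> M"
    using sup_norm_ge[OF gc] unfolding M_def by force
  have M0: "0 \<le> M" using gM[rule_format, of 0] g0[rule_format, of 0] A by auto
  define Z where "Z = M + 1"
  have Z: "0 < Z" using M0 by (simp add: Z_def)
  have "FF A g Z \<le> M * ((1 - exp (-(Z*A))) / Z)" by (rule FF_le[OF _ gc g0 gM Z]) (use A in auto)
  also have "\<dots> \<le> M * (1 / Z)"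
    using M0 Z by (intro mult_left_mono divide_right_mono) auto
  also have "\<dots> < 1" using M0 by (simp add: Z_def)
  finally have FZ: "FF A g Z < 1" .
  have F0: "FF A g 0 = integral {0..A} g" by (simp add: FF_def)
  obtain x where x: "0 \<le> x" "x \<le> Z" "FF A g x = 1"
    using IVT2'[where f="FF A g" and a=0 and b=Z and y=1] FZ F0 gi Z FF_cont[OF gc g0, of Z] A by auto
  have "x \<noteq> 0" using x F0 gi by auto
  with x have "0 < x \<and> FF A g x = 1" by auto
  then show ?thesis by blast
qed

lemma FF_unique:
  fixes g :: "real \<Rightarrow> real" and A :: real
  assumes A: "0 < A" and gc: "continuous_on {0..A} g" and g0: "\<forall>a\<in>{0..A}. 0 \<le> g a"
    and gi: "integral {0..A} g \<noteq> 0" and "FF A g z1 = 1" "FF A g z2 = 1"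
  shows "z1 = z2"
  using FF_strict[OF A gc g0 gi, of z1 z2] FF_strict[OF A gc g0 gi, of z2 z1] assms(5,6)
  by (cases z1 z2 rule: linorder_cases) auto

lemma lotka_eq_FF:
  "lotka_eq A k \<mu> z \<longleftrightarrow> FF A (\<lambda>a. k a * exp (- integral {0..a} \<mu>)) z = 1"
proof -
  have "integral {0..A} (\<lambda>a. k a * exp (- z * a - integral {0..a} \<mu>))
      = integral {0..A} (\<lambda>a. k a * exp (- integral {0..a} \<mu>) * exp (-(z*a)))"
  proof (intro integral_cong)
    fix a
    have e0: "- z * a - integral {0..a} \<mu> = (- integral {0..a} \<mu>) + (-(z*a))" by simp
    show "k a * exp (- z * a - integral {0..a} \<mu>) = k a * exp (- integral {0..a} \<mu>) * exp (-(z*a))"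
      unfolding e0 exp_add by (simp only: mult.assoc)
  qed
  then show ?thesis unfolding lotka_eq_def FF_def by simp
qed

lemma ind_cont:
  fixes \<mu> :: "real \<Rightarrow> real"
  assumes "continuous_on {0..A} \<mu>"
  shows "continuous_on {0..A} (\<lambda>a. integral {0..a} \<mu>)"
  by (intro indefinite_integral_continuous_1 integrable_continuous_interval assms)

lemma ind_int:
  fixes \<mu> :: "real \<Rightarrow> real"
  assumes "continuous_on {0..A} \<mu>" "a \<in> {0..A}"
  shows "\<mu> integrable_on {0..a}"
  by (rule integrable_continuous_interval, rule continuous_on_subset[OF assms(1)]) (use assms(2) in auto)

lemma ind_nonneg:
  fixes \<mu> :: "real \<Rightarrow> real"
  assumes "continuous_on {0..A} \<mu>" "\<forall>a\<in>{0..A}. 0 \<le> \<mu> a" "a \<in> {0..A}"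
  shows "0 \<le> integral {0..a} \<mu>"
  by (rule integral_nonneg[OF ind_int[OF assms(1,3)]]) (use assms(2,3) in auto)

lemma ind_mono:
  fixes \<mu> \<mu>' :: "real \<Rightarrow> real"
  assumes "continuous_on {0..A} \<mu>" "continuous_on {0..A} \<mu>'" "\<forall>a\<in>{0..A}. \<mu> a \<le> \<mu>' a" "a \<in> {0..A}"
  shows "integral {0..a} \<mu> \<le> integral {0..a} \<mu>'"
  by (rule integral_le[OF ind_int[OF assms(1,4)] ind_int[OF assms(2,4)]]) (use assms(3,4) in auto)

lemma ind_diff:
  fixes \<mu> \<mu>' :: "real \<Rightarrow> real"
  assumes "continuous_on {0..A} \<mu>" "continuous_on {0..A} \<mu>'" "\<forall>a\<in>{0..A}. \<bar>\<mu>' a - \<mu> a\<bar> \<le> N" "a \<in> {0..A}"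
  shows "\<bar>integral {0..a} \<mu>' - integral {0..a} \<mu>\<bar> \<le> a * N"
proof -
  have i: "(\<lambda>x. \<mu>' x - \<mu> x) integrable_on {0..a}"
    by (intro integrable_diff ind_int[OF assms(2,4)] ind_int[OF assms(1,4)])
  have e: "integral {0..a} \<mu>' - integral {0..a} \<mu> = integral {0..a} (\<lambda>x. \<mu>' x - \<mu> x)"
    by (intro integral_diff[symmetric] ind_int[OF assms(2,4)] ind_int[OF assms(1,4)])
  have "integral {0..a} (\<lambda>x. \<mu>' x - \<mu> x) \<le> integral {0..a} (\<lambda>x. N)"
  proof (rule integral_le[OF i])
    show "(\<lambda>x. N) integrable_on {0..a}" by (rule integrable_const_ivl)
    fix x assume "x \<in> {0..a}"
    then have "x \<in> {0..A}" using assms(4) by auto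
    then have "\<bar>\<mu>' x - \<mu> x\<bar> \<le> N" using assms(3) by blast
    then show "\<mu>' x - \<mu> x \<le> N" by linarith
  qed
  moreover have "integral {0..a} (\<lambda>x. -N) \<le> integral {0..a} (\<lambda>x. \<mu>' x - \<mu> x)"
  proof (rule integral_le[OF _ i])
    show "(\<lambda>x. -N) integrable_on {0..a}" by (rule integrable_const_ivl)
    fix x assume "x \<in> {0..a}"
    then have "x \<in> {0..A}" using assms(4) by auto
    then have "\<bar>\<mu>' x - \<mu> x\<bar> \<le> N" using assms(3) by blast
    then show "-N \<le> \<mu>' x - \<mu> x" by linarith
  qed
  ultimately show ?thesis unfolding e using assms(4) by (simp add: abs_le_iff)
qed

lemma exp_lip:
  fixes x y :: real
  assumes "0 \<le> x" "0 \<le> y"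
  shows "\<bar>exp (-x) - exp (-y)\<bar> \<le> \<bar>x - y\<bar>"
proof -
  have *: "exp (-u) - exp (-v) \<le> v - u" if "0 \<le> u" "u \<le> v" for u v :: real
  proof -
    have e0: "-v = -u + (-(v-u))" by simp
    have e: "exp (-v) = exp (-u) * exp (-(v-u))" by (metis e0 exp_add)
    have h1: "1 - exp (-(v-u)) \<le> v - u" using exp_ge_add_one_self[of "-(v-u)"] by linarith
    have h0: "0 \<le> 1 - exp (-(v-u))" using that by simp
    have h2: "exp (-u) \<le> 1" using that by simp
    have "exp (-u) - exp (-v) = exp (-u) * (1 - exp (-(v-u)))"
      unfolding e by (simp add: right_diff_distrib)
    also have "\<dots> \<le> 1 * (v - u)" using h0 h1 h2 by (intro mult_mono) auto
    finally show ?thesis by simp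
  qed
  show ?thesis
  proof (cases "x \<le> y")
    case True
    then show ?thesis using *[of x y] assms by (simp add: abs_le_iff)
  next
    case False
    then show ?thesis using *[of y x] assms by (simp add: abs_le_iff)
  qed
qed

lemma weight_cont:
  fixes k \<mu> :: "real \<Rightarrow> real"
  assumes "continuous_on {0..A} k" "continuous_on {0..A} \<mu>"
  shows "continuous_on {0..A} (\<lambda>a. k a * exp (- integral {0..a} \<mu>))"
  by (intro continuous_intros assms ind_cont)

lemma FF_mono:
  fixes g1 g2 :: "real \<Rightarrow> real"
  assumes "continuous_on {0..A} g1" "continuous_on {0..A} g2" "\<forall>a\<in>{0..A}. g1 a \<le> g2 a"
  shows "FF A g1 z \<le> FF A g2 z"
  unfolding FF_def using assms by (intro integral_le FF_int) auto

lemma P_char: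
  fixes k \<mu> :: "real \<Rightarrow> real"
  assumes A: "0 < A" and kc: "continuous_on {0..A} k" and mc: "continuous_on {0..A} \<mu>"
    and k0: "\<forall>a\<in>{0..A}. 0 \<le> k a"
    and gi: "1 < integral {0..A} (\<lambda>a. k a * exp (- integral {0..a} \<mu>))"
  shows "0 < lotka_P A k \<mu> \<and> FF A (\<lambda>a. k a * exp (- integral {0..a} \<mu>)) (lotka_P A k \<mu>) = 1"
    "FF A (\<lambda>a. k a * exp (- integral {0..a} \<mu>)) (lotka_sol A k \<mu>) = 1"
proof -
  let ?g = "\<lambda>a. k a * exp (- integral {0..a} \<mu>)"
  have gc: "continuous_on {0..A} ?g" by (rule weight_cont[OF kc mc])
  have g0: "\<forall>a\<in>{0..A}. 0 \<le> ?g a" using k0 by auto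
  have gn: "integral {0..A} ?g \<noteq> 0" using gi by auto
  obtain z where z: "0 < z" "FF A ?g z = 1" using FF_root[OF A gc g0 gi] by auto
  have u: "z' = z" if "FF A ?g z' = 1" for z' using FF_unique[OF A gc g0 gn that z(2)] .
  have "lotka_P A k \<mu> = z"
    unfolding lotka_P_def lotka_eq_FF by (rule the_equality) (use z u in blast)+
  then show "0 < lotka_P A k \<mu> \<and> FF A ?g (lotka_P A k \<mu>) = 1" using z by simp
  have "lotka_sol A k \<mu> = z"
    unfolding lotka_sol_def lotka_eq_FF by (rule the_equality) (use z u in blast)+
  then show "FF A ?g (lotka_sol A k \<mu>) = 1" using z by simp
qed

lemma key_ineq:
  fixes x R :: real
  assumes "1 < R" "R \<le> x"
  shows "exp x * ln R \<le> (2*x) powr (2*x - 1)"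
proof -
  have x1: "1 < x" using assms by simp
  have lx: "0 < ln x" using x1 by simp
  have "ln R \<le> ln x" using assms by simp
  then have "exp x * ln R \<le> exp x * ln x" by simp
  also have "\<dots> = exp (x + ln (ln x))" using lx by (simp add: exp_add)
  also have "\<dots> \<le> exp ((2*x - 1) * ln (2*x))"
  proof -
    have a: "ln (ln x) \<le> ln x - 1" using ln_le_minus_one[OF lx] .
    have b: "ln (2*x) = ln 2 + ln x" using x1 by (simp add: ln_mult)
    have c: "ln x \<le> (2*x - 1) * ln x" using lx x1 by (simp add: mult_le_cancel_right1)
    have d: "x - 1 \<le> (2*x - 1) * ln 2"
    proof -
      have "(2*x - 1) * (2/3) \<le> (2*x - 1) * ln 2"
        using ln2_ge_two_thirds x1 by (intro mult_left_mono) auto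
      moreover have "x - 1 \<le> (2*x - 1) * (2/3)" using x1 by (simp add: field_simps)
      ultimately show ?thesis by (meson order_trans)
    qed
    have "x + ln (ln x) \<le> (2*x - 1) * ln (2*x)"
      unfolding b using a c d by (simp add: distrib_left)
    then show ?thesis by simp
  qed
  also have "\<dots> = (2*x) powr (2*x - 1)" using x1 by (simp add: powr_def)
  finally show ?thesis .
qed

lemma one_sided:
  fixes k k' \<mu> \<mu>' kmin \<mu>max :: "real \<Rightarrow> real" and A K D z z' Nk Nm :: real
  assumes A: "0 < A"
    and c: "continuous_on {0..A} k" "continuous_on {0..A} k'" "continuous_on {0..A} \<mu>"
      "continuous_on {0..A} \<mu>'" "continuous_on {0..A} kmin" "continuous_on {0..A} \<mu>max"
    and nn: "\<forall>a\<in>{0..A}. 0 \<le> k a \<and> 0 \<le> k' a \<and> 0 \<le> \<mu> a \<and> 0 \<le> \<mu>' a \<and> 0 \<le> kmin a"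
    and bd: "\<forall>a\<in>{0..A}. kmin a \<le> k' a \<and> k a \<le> K \<and> k' a \<le> K \<and> \<mu>' a \<le> \<mu>max a"
    and Nk: "\<forall>a\<in>{0..A}. \<bar>k' a - k a\<bar> \<le> Nk" and Nm: "\<forall>a\<in>{0..A}. \<bar>\<mu>' a - \<mu> a\<bar> \<le> Nm"
    and D: "D = integral {0..A} (\<lambda>a. a * kmin a * exp (- integral {0..a} \<mu>max))" "0 < D"
    and z: "0 \<le> z" "z \<le> z'"
    and F: "FF A (\<lambda>a. k a * exp (- integral {0..a} \<mu>)) z = 1"
      "FF A (\<lambda>a. k' a * exp (- integral {0..a} \<mu>')) z' = 1"
  shows "z' - z \<le> exp (K*A) * A * (Nk + K*A*Nm) / D"
proof -
  define E where "E a = exp (- integral {0..a} \<mu>)" for a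
  define E' where "E' a = exp (- integral {0..a} \<mu>')" for a
  define Im where "Im a = exp (- integral {0..a} \<mu>max)" for a
  let ?g = "\<lambda>a. k a * E a"
  let ?g' = "\<lambda>a. k' a * E' a"
  have gc: "continuous_on {0..A} ?g" unfolding E_def by (rule weight_cont[OF c(1,3)])
  have gc': "continuous_on {0..A} ?g'" unfolding E'_def by (rule weight_cont[OF c(2,4)])
  have Imc: "continuous_on {0..A} (\<lambda>a. a * kmin a * Im a)" unfolding Im_def
    by (intro continuous_intros c ind_cont)
  have m0: "\<forall>a\<in>{0..A}. 0 \<le> \<mu> a" "\<forall>a\<in>{0..A}. 0 \<le> \<mu>' a" using nn by auto
  have E1: "E a \<le> 1" "E' a \<le> 1" if "a \<in> {0..A}" for a
    unfolding E_def E'_def using ind_nonneg[OF c(3) m0(1) that] ind_nonneg[OF c(4) m0(2) that] by auto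
  have Epos: "0 < E a" "0 < E' a" "0 < Im a" for a unfolding E_def E'_def Im_def by auto
  have g0': "\<forall>a\<in>{0..A}. 0 \<le> ?g' a" using nn Epos by (simp add: less_imp_le)
  have K0: "0 \<le> K" using bd nn A by (meson atLeastAtMost_iff less_imp_le order.refl order_trans)
  have Nm0: "0 \<le> Nm" using Nm A by (meson abs_ge_zero atLeastAtMost_iff less_imp_le order.refl order_trans)
  have Nk0: "0 \<le> Nk" using Nk A by (meson abs_ge_zero atLeastAtMost_iff less_imp_le order.refl order_trans)
  have zK: "z' \<le> K"
  proof (cases "z' = 0")
    case True then show ?thesis using K0 by simp
  next
    case False
    then have zp: "0 < z'" using z by simp
    have gK: "\<forall>a\<in>{0..A}. ?g' a \<le> K"
    proof
      fix a assume a: "a \<in> {0..A}"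
      have "k' a * E' a \<le> K * 1" using bd a nn E1[OF a] Epos K0 by (intro mult_mono) (auto simp: less_imp_le)
      then show "?g' a \<le> K" by simp
    qed
    have "1 \<le> K * ((1 - exp (-(z'*A))) / z')"
      using FF_le[OF _ gc' g0' gK zp] A F(2) unfolding E'_def by simp
    also have "\<dots> \<le> K * (1 / z')" using K0 zp by (intro mult_left_mono divide_right_mono) auto
    finally have "1 \<le> K / z'" by simp
    then show ?thesis using zp by (simp add: pos_le_divide_eq)
  qed
  have s1: "FF A ?g' z - FF A ?g z \<le> A * (Nk + K*A*Nm)"
  proof -
    have "FF A ?g' z - FF A ?g z = integral {0..A} (\<lambda>a. ?g' a * exp (-(z*a)) - ?g a * exp (-(z*a)))"
      unfolding FF_def by (intro integral_diff[symmetric] FF_int gc gc')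
    also have "\<dots> \<le> integral {0..A} (\<lambda>a. Nk + K*A*Nm)"
    proof (rule integral_le)
      show "(\<lambda>a. ?g' a * exp (-(z*a)) - ?g a * exp (-(z*a))) integrable_on {0..A}"
        by (intro integrable_diff FF_int gc gc')
      show "(\<lambda>a. Nk + K*A*Nm) integrable_on {0..A}" by (rule integrable_const_ivl)
      fix a assume a: "a \<in> {0..A}"
      have ee: "0 < exp (-(z*a))" "exp (-(z*a)) \<le> 1" using a z by (auto simp: mult_nonneg_nonneg)
      have dE: "\<bar>E' a - E a\<bar> \<le> A * Nm"
      proof -
        have "\<bar>E' a - E a\<bar> \<le> \<bar>integral {0..a} \<mu>' - integral {0..a} \<mu>\<bar>"
          unfolding E_def E'_def
          by (rule exp_lip[OF ind_nonneg[OF c(4) m0(2) a] ind_nonneg[OF c(3) m0(1) a]])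
        also have "\<dots> \<le> a * Nm" by (rule ind_diff[OF c(3,4) Nm a])
        also have "\<dots> \<le> A * Nm" using a Nm0 by (intro mult_right_mono) auto
        finally show ?thesis .
      qed
      have t1: "\<bar>(k' a - k a) * E' a\<bar> \<le> Nk * 1"
        unfolding abs_mult using Nk a E1[OF a] Epos[of a] by (intro mult_mono) auto
      have t2: "\<bar>k a * (E' a - E a)\<bar> \<le> K * (A * Nm)"
        unfolding abs_mult using bd nn a dE K0 by (intro mult_mono) auto
      have "?g' a - ?g a = (k' a - k a) * E' a + k a * (E' a - E a)" by (simp add: algebra_simps)
      then have "\<bar>?g' a - ?g a\<bar> \<le> Nk + K*A*Nm" using t1 t2 abs_triangle_ineq[of "(k' a - k a) * E' a" "k a * (E' a - E a)"]
        by (simp add: mult_ac)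
      moreover have "(?g' a - ?g a) * exp (-(z*a)) \<le> \<bar>?g' a - ?g a\<bar> * 1"
        using ee by (intro mult_mono) auto
      ultimately have X: "(?g' a - ?g a) * exp (-(z*a)) \<le> Nk + K*A*Nm" by simp
      have eq: "?g' a * exp (-(z*a)) - ?g a * exp (-(z*a)) = (?g' a - ?g a) * exp (-(z*a))"
        by (simp add: algebra_simps)
      show "?g' a * exp (-(z*a)) - ?g a * exp (-(z*a)) \<le> Nk + K*A*Nm" unfolding eq by (rule X)
    qed
    also have "\<dots> = A * (Nk + K*A*Nm)" using A by simp
    finally show ?thesis .
  qed
  have s2: "(z'-z) * (exp (-(z'*A)) * D) \<le> FF A ?g' z - FF A ?g' z'"
  proof -
    have "exp (-(z'*A)) * D = integral {0..A} (\<lambda>a. exp (-(z'*A)) * (a * kmin a * Im a))"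
      unfolding D Im_def by (simp add: integral_mult_right)
    also have "\<dots> \<le> integral {0..A} (\<lambda>a. a * ?g' a * exp (-(z'*a)))"
    proof (rule integral_le)
      show "(\<lambda>a. exp (-(z'*A)) * (a * kmin a * Im a)) integrable_on {0..A}"
        by (intro integrable_continuous_interval continuous_intros Imc)
      show "(\<lambda>a. a * ?g' a * exp (-(z'*a))) integrable_on {0..A}"
        by (intro integrable_continuous_interval continuous_intros gc')
      fix a assume a: "a \<in> {0..A}"
      have "integral {0..a} \<mu>' \<le> integral {0..a} \<mu>max"
        by (rule ind_mono[OF c(4,6) _ a]) (use bd in auto)
      then have ImE: "Im a \<le> E' a" unfolding Im_def E'_def by simp
      have kk: "kmin a * Im a \<le> k' a * E' a"
        using bd nn a ImE Epos[of a] by (intro mult_mono) (auto simp: less_imp_le)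
      have ex: "exp (-(z'*A)) \<le> exp (-(z'*a))" using a z by (simp add: mult_left_mono)
      have "exp (-(z'*A)) * (a * kmin a * Im a) = a * (kmin a * Im a) * exp (-(z'*A))" by simp
      also have "\<dots> \<le> a * (k' a * E' a) * exp (-(z'*a))"
      proof (rule mult_mono)
        show "a * (kmin a * Im a) \<le> a * (k' a * E' a)" using a kk by (intro mult_left_mono) auto
        show "0 \<le> a * (k' a * E' a)" using a nn Epos[of a] by (simp add: less_imp_le)
      qed (use ex in auto)
      finally show "exp (-(z'*A)) * (a * kmin a * Im a) \<le> a * ?g' a * exp (-(z'*a))" by (simp add: mult_ac)
    qed
    finally have "exp (-(z'*A)) * D \<le> integral {0..A} (\<lambda>a. a * ?g' a * exp (-(z'*a)))" .
    then have "(z'-z) * (exp (-(z'*A)) * D) \<le> (z'-z) * integral {0..A} (\<lambda>a. a * ?g' a * exp (-(z'*a)))"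
      using z by (intro mult_left_mono) auto
    also have "\<dots> \<le> FF A ?g' z - FF A ?g' z'" by (rule FF_diff_lower[OF gc' g0' z(2)])
    finally show ?thesis .
  qed
  have Fg: "FF A ?g z = 1" "FF A ?g' z' = 1" using F unfolding E_def E'_def by auto
  have "(z'-z) * (exp (-(K*A)) * D) \<le> (z'-z) * (exp (-(z'*A)) * D)"
    using z zK A D(2) by (intro mult_left_mono mult_right_mono) (auto simp: mult_right_mono)
  also have "\<dots> \<le> A * (Nk + K*A*Nm)" using s1 s2 Fg by linarith
  finally have "(z'-z) * (exp (-(K*A)) * D) \<le> A * (Nk + K*A*Nm)" .
  then have "z' - z \<le> A * (Nk + K*A*Nm) / (exp (-(K*A)) * D)"
    using D(2) by (simp add: pos_le_divide_eq)
  also have "\<dots> = exp (K*A) * A * (Nk + K*A*Nm) / D" by (simp add: exp_minus field_simps)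
  finally show ?thesis .
qed

theorem theorem1:
  fixes A G :: real and kmin kmax \<mu>min \<mu>max :: "real \<Rightarrow> real"
  assumes A_pos: "0 < A"
    and cont: "continuous_on {0..A} kmin" "continuous_on {0..A} kmax"
              "continuous_on {0..A} \<mu>min" "continuous_on {0..A} \<mu>max"
    and nonneg: "\<forall>a\<in>{0..A}. 0 \<le> kmin a \<and> 0 \<le> kmax a \<and> 0 \<le> \<mu>min a \<and> 0 \<le> \<mu>max a"
    and lip: "\<exists>C. C-lipschitz_on {0..A} kmin" "\<exists>C. C-lipschitz_on {0..A} kmax"
             "\<exists>C. C-lipschitz_on {0..A} \<mu>min" "\<exists>C. C-lipschitz_on {0..A} \<mu>max"
    and order: "\<forall>a\<in>{0..A}. kmin a \<le> kmax a \<and> \<mu>min a \<le> \<mu>max a"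
    and R0: "integral {0..A} (\<lambda>a. kmin a * exp (- integral {0..a} \<mu>max)) > 1"
    and G_pos: "0 < G"
    and G_bound: "\<forall>f\<in>{kmin, kmax, \<mu>min, \<mu>max}. sup_norm A f + lip_seminorm A f \<le> G"
  defines "\<zeta>min \<equiv> lotka_sol A kmin \<mu>max"
    and "\<zeta>max \<equiv> lotka_sol A kmax \<mu>min"
    and "S \<equiv> {(k, \<mu>). k \<in> H_G A G \<and> \<mu> \<in> H_G A G \<and>
                (\<forall>a\<in>{0..A}. kmin a \<le> k a \<and> k a \<le> kmax a \<and> \<mu>min a \<le> \<mu> a \<and> \<mu> a \<le> \<mu>max a)}"
    and "I \<equiv> (\<lambda>a. exp (- integral {0..a} \<mu>max))"
    and "K \<equiv> sup_norm A kmax"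
  defines "L \<equiv> A * (2 * A * K) powr (2 * A * K - 1) /
               (integral {0..A} (\<lambda>a. a * kmin a * I a) * ln (integral {0..A} (\<lambda>a. kmin a * I a)))"
  shows "(\<forall>(k, \<mu>)\<in>S. lotka_P A k \<mu> \<in> {\<zeta>min..\<zeta>max}) \<and>
         (\<forall>(k, \<mu>)\<in>S. \<forall>(k', \<mu>')\<in>S.
            \<bar>lotka_P A k' \<mu>' - lotka_P A k \<mu>\<bar>
              \<le> L * sup_norm A (\<lambda>a. k' a - k a) + L * K * A * sup_norm A (\<lambda>a. \<mu>' a - \<mu> a))"
proof -
  let ?gmin = "\<lambda>a. kmin a * exp (- integral {0..a} \<mu>max)"
  let ?gmax = "\<lambda>a. kmax a * exp (- integral {0..a} \<mu>min)"
  have gminc: "continuous_on {0..A} ?gmin" by (rule weight_cont[OF cont(1,4)])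
  have gmaxc: "continuous_on {0..A} ?gmax" by (rule weight_cont[OF cont(2,3)])
  have gmin0: "\<forall>a\<in>{0..A}. 0 \<le> ?gmin a" using nonneg by auto
  have gmax0: "\<forall>a\<in>{0..A}. 0 \<le> ?gmax a" using nonneg by auto
  have gmin_ne: "integral {0..A} ?gmin \<noteq> 0" using R0 by auto
  have kmaxK: "\<forall>a\<in>{0..A}. kmax a \<le> K"
    unfolding K_def using sup_norm_ge[OF cont(2)] by force
  have mem: "continuous_on {0..A} k \<and> continuous_on {0..A} \<mu> \<and> (\<forall>a\<in>{0..A}. 0 \<le> k a \<and> 0 \<le> \<mu> a)
     \<and> (\<forall>a\<in>{0..A}. kmin a \<le> k a \<and> k a \<le> kmax a \<and> \<mu>min a \<le> \<mu> a \<and> \<mu> a \<le> \<mu>max a)"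
    if "(k, \<mu>) \<in> S" for k \<mu>
    using that unfolding S_def H_G_def by auto
  have between: "\<forall>a\<in>{0..A}. ?gmin a \<le> k a * exp (- integral {0..a} \<mu>) \<and>
                   k a * exp (- integral {0..a} \<mu>) \<le> ?gmax a"
    if "(k, \<mu>) \<in> S" for k \<mu>
  proof
    fix a assume a: "a \<in> {0..A}"
    have m: "continuous_on {0..A} k" "continuous_on {0..A} \<mu>" "\<forall>a\<in>{0..A}. 0 \<le> k a \<and> 0 \<le> \<mu> a"
      "\<forall>a\<in>{0..A}. kmin a \<le> k a \<and> k a \<le> kmax a \<and> \<mu>min a \<le> \<mu> a \<and> \<mu> a \<le> \<mu>max a"
      using mem[OF that] by auto
    have i1: "integral {0..a} \<mu> \<le> integral {0..a} \<mu>max"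
      by (rule ind_mono[OF m(2) cont(4) _ a]) (use m(4) in auto)
    have i2: "integral {0..a} \<mu>min \<le> integral {0..a} \<mu>"
      by (rule ind_mono[OF cont(3) m(2) _ a]) (use m(4) in auto)
    show "?gmin a \<le> k a * exp (- integral {0..a} \<mu>) \<and> k a * exp (- integral {0..a} \<mu>) \<le> ?gmax a"
    proof
      show "?gmin a \<le> k a * exp (- integral {0..a} \<mu>)"
        using i1 m(4) a m(3) by (intro mult_mono) auto
      show "k a * exp (- integral {0..a} \<mu>) \<le> ?gmax a"
        using i2 m(4) a nonneg by (intro mult_mono) auto
    qed
  qed
  have Pk: "0 < lotka_P A k \<mu> \<and> FF A (\<lambda>a. k a * exp (- integral {0..a} \<mu>)) (lotka_P A k \<mu>) = 1"
    if "(k, \<mu>) \<in> S" for k \<mu>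
  proof (rule P_char(1)[OF A_pos])
    show "continuous_on {0..A} k" "continuous_on {0..A} \<mu>" "\<forall>a\<in>{0..A}. 0 \<le> k a"
      using mem[OF that] by auto
    have "integral {0..A} ?gmin \<le> integral {0..A} (\<lambda>a. k a * exp (- integral {0..a} \<mu>))"
      using between[OF that] mem[OF that] cont(1) cont(4)
      by (intro integral_le integrable_continuous_interval weight_cont) auto
    then show "1 < integral {0..A} (\<lambda>a. k a * exp (- integral {0..a} \<mu>))" using R0 by linarith
  qed
  have gmax_gt: "1 < integral {0..A} ?gmax"
  proof -
    have "integral {0..A} ?gmin \<le> integral {0..A} ?gmax"
      using order nonneg
      by (intro integral_le integrable_continuous_interval gminc gmaxc)
        (auto intro!: mult_mono ind_mono[OF cont(3,4)])
    then show ?thesis using R0 by linarith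
  qed
  have gmax_ne: "integral {0..A} ?gmax \<noteq> 0" using gmax_gt by auto
  have zmin: "FF A ?gmin \<zeta>min = 1"
    unfolding \<zeta>min_def by (rule P_char(2)[OF A_pos cont(1,4)]) (use nonneg R0 in auto)
  have zmax: "FF A ?gmax \<zeta>max = 1"
    unfolding \<zeta>max_def by (rule P_char(2)[OF A_pos cont(2,3)]) (use nonneg gmax_gt in auto)
  have part1: "lotka_P A k \<mu> \<in> {\<zeta>min..\<zeta>max}" if kS: "(k, \<mu>) \<in> S" for k \<mu>
  proof -
    let ?g = "\<lambda>a. k a * exp (- integral {0..a} \<mu>)"
    define z where "z = lotka_P A k \<mu>"
    have gc: "continuous_on {0..A} ?g" using mem[OF kS] by (intro weight_cont) auto
    have Fz: "FF A ?g z = 1" using Pk[OF kS] unfolding z_def by auto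
    have a1: "FF A ?gmin z \<le> 1"
      using FF_mono[OF gminc gc, of z] between[OF kS] Fz by auto
    have a2: "1 \<le> FF A ?gmax z"
      using FF_mono[OF gc gmaxc, of z] between[OF kS] Fz by auto
    have "\<zeta>min \<le> z"
    proof (rule ccontr)
      assume "\<not> \<zeta>min \<le> z"
      then have "FF A ?gmin \<zeta>min < FF A ?gmin z" by (intro FF_strict[OF A_pos gminc gmin0 gmin_ne]) auto
      then show False using a1 zmin by linarith
    qed
    moreover have "z \<le> \<zeta>max"
    proof (rule ccontr)
      assume "\<not> z \<le> \<zeta>max"
      then have "FF A ?gmax z < FF A ?gmax \<zeta>max" by (intro FF_strict[OF A_pos gmaxc gmax0 gmax_ne]) auto
      then show False using a2 zmax by linarith
    qed
    ultimately show ?thesis unfolding z_def by auto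
  qed
  define D where "D = integral {0..A} (\<lambda>a. a * kmin a * exp (- integral {0..a} \<mu>max))"
  have D0: "0 < D"
  proof -
    have "0 < integral {0..A} (\<lambda>a. a * ?gmin a)"
      by (rule int_pos[OF A_pos gminc _ gmin0 _ _ gmin_ne]) (auto intro!: continuous_intros)
    then show ?thesis unfolding D_def by (simp add: mult_ac)
  qed
  define R where "R = integral {0..A} ?gmin"
  have R1: "1 < R" using R0 unfolding R_def by simp
  have RK: "R \<le> A * K"
  proof -
    have "R \<le> integral {0..A} (\<lambda>a. K)"
      unfolding R_def
    proof (rule integral_le[OF integrable_continuous_interval[OF gminc]])
      show "(\<lambda>a. K) integrable_on {0..A}" by (rule integrable_const_ivl)
      fix a assume a: "a \<in> {0..A}"
      have "0 \<le> integral {0..a} \<mu>max" using ind_nonneg[OF cont(4) _ a] nonneg by auto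
      then have "?gmin a \<le> kmax a * 1" using a nonneg order by (intro mult_mono) auto
      moreover have "kmax a \<le> K" using kmaxK a by blast
      ultimately show "?gmin a \<le> K" by linarith
    qed
    then show ?thesis using A_pos by simp
  qed
  have lnR: "0 < ln R" using R1 by simp
  have key: "exp (K*A) * ln R \<le> (2 * A * K) powr (2 * A * K - 1)"
    using key_ineq[OF R1 RK] by (simp add: mult_ac)
  have L_eq: "L = A * (2 * A * K) powr (2 * A * K - 1) / (D * ln R)"
    unfolding L_def D_def R_def I_def by simp
  have CL: "exp (K*A) * A / D \<le> L"
  proof -
    have "exp (K*A) \<le> (2 * A * K) powr (2 * A * K - 1) / ln R"
      using key lnR by (simp add: pos_le_divide_eq)
    then have "A / D * exp (K*A) \<le> A / D * ((2 * A * K) powr (2 * A * K - 1) / ln R)"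
      using A_pos D0 by (intro mult_left_mono) auto
    then show ?thesis unfolding L_eq by (simp add: field_simps)
  qed
  have K0: "0 \<le> K" using kmaxK nonneg A_pos by (meson atLeastAtMost_iff less_imp_le order.refl order_trans)
  have part2: "\<bar>lotka_P A k' \<mu>' - lotka_P A k \<mu>\<bar>
              \<le> L * sup_norm A (\<lambda>a. k' a - k a) + L * K * A * sup_norm A (\<lambda>a. \<mu>' a - \<mu> a)"
    if kS: "(k, \<mu>) \<in> S" and kS': "(k', \<mu>') \<in> S" for k \<mu> k' \<mu>'
  proof -
    define Nk where "Nk = sup_norm A (\<lambda>a. k' a - k a)"
    define Nm where "Nm = sup_norm A (\<lambda>a. \<mu>' a - \<mu> a)"
    have m: "continuous_on {0..A} k" "continuous_on {0..A} \<mu>" "\<forall>a\<in>{0..A}. 0 \<le> k a \<and> 0 \<le> \<mu> a"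
      "\<forall>a\<in>{0..A}. kmin a \<le> k a \<and> k a \<le> kmax a \<and> \<mu>min a \<le> \<mu> a \<and> \<mu> a \<le> \<mu>max a"
      using mem[OF kS] by auto
    have m': "continuous_on {0..A} k'" "continuous_on {0..A} \<mu>'" "\<forall>a\<in>{0..A}. 0 \<le> k' a \<and> 0 \<le> \<mu>' a"
      "\<forall>a\<in>{0..A}. kmin a \<le> k' a \<and> k' a \<le> kmax a \<and> \<mu>min a \<le> \<mu>' a \<and> \<mu>' a \<le> \<mu>max a"
      using mem[OF kS'] by auto
    have dk: "continuous_on {0..A} (\<lambda>a. k' a - k a)" by (intro continuous_intros m(1) m'(1))
    have dm: "continuous_on {0..A} (\<lambda>a. \<mu>' a - \<mu> a)" by (intro continuous_intros m(2) m'(2))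
    have Nk: "\<forall>a\<in>{0..A}. \<bar>k' a - k a\<bar> \<le> Nk" "\<forall>a\<in>{0..A}. \<bar>k a - k' a\<bar> \<le> Nk"
      unfolding Nk_def using sup_norm_ge[OF dk]
      by (auto simp: abs_minus_commute)
    have Nm: "\<forall>a\<in>{0..A}. \<bar>\<mu>' a - \<mu> a\<bar> \<le> Nm" "\<forall>a\<in>{0..A}. \<bar>\<mu> a - \<mu>' a\<bar> \<le> Nm"
      unfolding Nm_def using sup_norm_ge[OF dm]
      by (auto simp: abs_minus_commute)
    have Nk0: "0 \<le> Nk" using Nk(1) A_pos by (meson abs_ge_zero atLeastAtMost_iff less_imp_le order.refl order_trans)
    have Nm0: "0 \<le> Nm" using Nm(1) A_pos by (meson abs_ge_zero atLeastAtMost_iff less_imp_le order.refl order_trans)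
    define z where "z = lotka_P A k \<mu>"
    define z' where "z' = lotka_P A k' \<mu>'"
    have Fz: "0 < z" "FF A (\<lambda>a. k a * exp (- integral {0..a} \<mu>)) z = 1" using Pk[OF kS] unfolding z_def by auto
    have Fz': "0 < z'" "FF A (\<lambda>a. k' a * exp (- integral {0..a} \<mu>')) z' = 1" using Pk[OF kS'] unfolding z'_def by auto
    have "\<bar>z' - z\<bar> \<le> exp (K*A) * A * (Nk + K*A*Nm) / D"
    proof (cases "z \<le> z'")
      case True
      have "z' - z \<le> exp (K*A) * A * (Nk + K*A*Nm) / D"
      proof (rule one_sided[OF A_pos m(1) m'(1) m(2) m'(2) cont(1) cont(4) _ _ Nk(1) Nm(1) D_def D0 _ True Fz(2) Fz'(2)])
        show "\<forall>a\<in>{0..A}. 0 \<le> k a \<and> 0 \<le> k' a \<and> 0 \<le> \<mu> a \<and> 0 \<le> \<mu>' a \<and> 0 \<le> kmin a"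
          using m(3) m'(3) nonneg by auto
        show "\<forall>a\<in>{0..A}. kmin a \<le> k' a \<and> k a \<le> K \<and> k' a \<le> K \<and> \<mu>' a \<le> \<mu>max a"
        proof
          fix a assume a: "a \<in> {0..A}"
          have h: "kmin a \<le> k a" "k a \<le> kmax a" "\<mu> a \<le> \<mu>max a" using m(4) a by auto
          have h': "kmin a \<le> k' a" "k' a \<le> kmax a" "\<mu>' a \<le> \<mu>max a" using m'(4) a by auto
          have Kl: "kmax a \<le> K" using kmaxK a by blast
          show "kmin a \<le> k' a \<and> k a \<le> K \<and> k' a \<le> K \<and> \<mu>' a \<le> \<mu>max a" using h h' Kl by auto
        qed
      qed (use Fz in auto)
      then show ?thesis using True by simp
    next
      case False
      have "z - z' \<le> exp (K*A) * A * (Nk + K*A*Nm) / D"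
      proof (rule one_sided[OF A_pos m'(1) m(1) m'(2) m(2) cont(1) cont(4) _ _ Nk(2) Nm(2) D_def D0 _ _ Fz'(2) Fz(2)])
        show "\<forall>a\<in>{0..A}. 0 \<le> k' a \<and> 0 \<le> k a \<and> 0 \<le> \<mu>' a \<and> 0 \<le> \<mu> a \<and> 0 \<le> kmin a"
          using m(3) m'(3) nonneg by auto
        show "\<forall>a\<in>{0..A}. kmin a \<le> k a \<and> k' a \<le> K \<and> k a \<le> K \<and> \<mu> a \<le> \<mu>max a"
        proof
          fix a assume a: "a \<in> {0..A}"
          have h: "kmin a \<le> k a" "k a \<le> kmax a" "\<mu> a \<le> \<mu>max a" using m(4) a by auto
          have h': "kmin a \<le> k' a" "k' a \<le> kmax a" "\<mu>' a \<le> \<mu>max a" using m'(4) a by auto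
          have Kl: "kmax a \<le> K" using kmaxK a by blast
          show "kmin a \<le> k a \<and> k' a \<le> K \<and> k a \<le> K \<and> \<mu> a \<le> \<mu>max a" using h h' Kl by auto
        qed
      qed (use Fz' False in auto)
      then show ?thesis using False by simp
    qed
    also have "\<dots> = (exp (K*A) * A / D) * (Nk + K*A*Nm)" by simp
    also have "\<dots> \<le> L * (Nk + K*A*Nm)"
      using CL Nk0 Nm0 K0 A_pos by (intro mult_right_mono) auto
    also have "\<dots> = L * Nk + L * K * A * Nm" by (simp add: algebra_simps)
    finally show ?thesis unfolding z_def z'_def Nk_def Nm_def .
  qed
  have c1: "\<forall>(k, \<mu>)\<in>S. lotka_P A k \<mu> \<in> {\<zeta>min..\<zeta>max}"
  proof (rule ballI)
    fix p assume p: "p \<in> S"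
    obtain k \<mu> where kp: "p = (k, \<mu>)" by (cases p)
    show "case p of (k, \<mu>) \<Rightarrow> lotka_P A k \<mu> \<in> {\<zeta>min..\<zeta>max}"
      unfolding kp using part1[of k \<mu>] p kp by simp
  qed
  have c2: "\<forall>(k, \<mu>)\<in>S. \<forall>(k', \<mu>')\<in>S.
            \<bar>lotka_P A k' \<mu>' - lotka_P A k \<mu>\<bar>
              \<le> L * sup_norm A (\<lambda>a. k' a - k a) + L * K * A * sup_norm A (\<lambda>a. \<mu>' a - \<mu> a)"
  proof (rule ballI)
    fix p assume p: "p \<in> S"
    obtain k \<mu> where kp: "p = (k, \<mu>)" by (cases p)
    have "\<forall>(k', \<mu>')\<in>S. \<bar>lotka_P A k' \<mu>' - lotka_P A k \<mu>\<bar>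
              \<le> L * sup_norm A (\<lambda>a. k' a - k a) + L * K * A * sup_norm A (\<lambda>a. \<mu>' a - \<mu> a)"
    proof (rule ballI)
      fix q assume q: "q \<in> S"
      obtain k' \<mu>' where kq: "q = (k', \<mu>')" by (cases q)
      show "case q of (k', \<mu>') \<Rightarrow> \<bar>lotka_P A k' \<mu>' - lotka_P A k \<mu>\<bar>
              \<le> L * sup_norm A (\<lambda>a. k' a - k a) + L * K * A * sup_norm A (\<lambda>a. \<mu>' a - \<mu> a)"
        unfolding kq using part2[of k \<mu> k' \<mu>'] p kp q kq by simp
    qed
    then show "case p of (k, \<mu>) \<Rightarrow> \<forall>(k', \<mu>')\<in>S. \<bar>lotka_P A k' \<mu>' - lotka_P A k \<mu>\<bar>
              \<le> L * sup_norm A (\<lambda>a. k' a - k a) + L * K * A * sup_norm A (\<lambda>a. \<mu>' a - \<mu> a)"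
      unfolding kp by simp
  qed
  show ?thesis using c1 c2 by (rule conjI)
qed

end
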